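(* Let $f:\mathbb{R}^n\to\mathbb{R}$ be twice differentiable, let $x_0\in\mathbb{R}^n$ and $S_f=\{x : f(x)\le f(x_0)\}$. Assume there exist constants $M \ge m>0$ such that $M\|z\|^2 \ge z^{T}\nabla^2 f(x) z \ge m\|z\|^2$ for all $x\in S_f$ and all $z\in\mathbb{R}^n$. Let $x_k\in S_f$, $g_k=\nabla f(x_k)$, $\Delta t_k>0$, and let the preconditioner $H_k$ be given by the switching rule: either $$H_k = I - \frac{y s^{T} + s y^{T}}{y^{T}s} + 2\frac{y^{T}y}{(y^{T}s)^2} s s^{T}$$ for some vectors $s,y\in\mathbb{R}^n$ with $|s^{T}y|>\theta\|s\|^2$ (with $\theta>0$), or $H_k=(\nabla^2 f(x_k))^{-1}$. Let $s_k = -\frac{\Delta t_k}{1+\Delta t_k} H_k g_k$ and define $m_k(s) = \frac{1+0.5\Delta t_k}{1+\Delta t_k}\, g_k^{T}s$. Then there is a positive constant $c_m$ (independent of $k$) such that $$m_k(0)-m_k(s_k) \ge \frac{c_m \Delta t_k}{2(1+\Delta t_k)}\|g_k\|^2 .$$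
   Context: $\|\cdot\|$ is the Euclidean norm, $I$ the identity matrix. $m_k$ is the simplified local model of $f(x_k+s)-f(x_k)$ used in the explicit continuation method $x_{k+1}=x_k+s_k$, $s_k=\frac{\Delta t_k}{1+\Delta t_k}s_k^N$, $s_k^N=-H_kg_k$. *)

theory Defs
  imports "HOL-Analysis.Analysis"
begin

definition outer :: "real^'n \<Rightarrow> real^'n \<Rightarrow> real^'n^'n" where
  "outer u v = (\<chi> i j. u $ i * v $ j)"

definition precond_update :: "real^'n \<Rightarrow> real^'n \<Rightarrow> real^'n^'n" where
  "precond_update s y =
     mat 1 - (1 / (y \<bullet> s)) *\<^sub>R (outer y s + outer s y)
           + (2 * (y \<bullet> y) / (y \<bullet> s)^2) *\<^sub>R outer s s"

definition local_model :: "real \<Rightarrow> real^'n \<Rightarrow> real^'n \<Rightarrow> real" where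
  "local_model dt g s = (1 + dt / 2) / (1 + dt) * (g \<bullet> s)"

end

theory Submission
  imports Defs
begin


lemma schwarz_aux:
  fixes f :: "real^'n \<Rightarrow> real" and grad :: "real^'n \<Rightarrow> real^'n"
    and Hess :: "real^'n \<Rightarrow> real^'n^'n"
  assumes f_grad: "\<forall>x. (f has_derivative (\<lambda>h. grad x \<bullet> h)) (at x)"
    and gH: "(grad has_derivative (\<lambda>h. Hess x *v h)) (at x)"
    and e: "e > 0"
  shows "\<exists>d>0. \<forall>h. 0 < h \<and> h < d \<longrightarrow>
     \<bar>(f (x + h *\<^sub>R u + h *\<^sub>R v) - f (x + h *\<^sub>R u) - f (x + h *\<^sub>R v) + f x) - h^2 * (u \<bullet> (Hess x *v v))\<bar>
       \<le> e * h^2 * (norm u * (2 * norm u + norm v))"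
proof -
  obtain d where d: "d > 0" and dd: "\<And>y. norm (y - x) < d \<Longrightarrow>
      norm (grad y - grad x - Hess x *v (y - x)) \<le> e * norm (y - x)"
    using gH e unfolding has_derivative_within_alt by (metis UNIV_I)
  define d' where "d' = d / (norm u + norm v + 1)"
  have d'pos: "d' > 0" using d norm_ge_zero[of u] norm_ge_zero[of v] unfolding d'_def by (intro divide_pos_pos) linarith+
  have "\<forall>h. 0 < h \<and> h < d' \<longrightarrow>
     \<bar>(f (x + h *\<^sub>R u + h *\<^sub>R v) - f (x + h *\<^sub>R u) - f (x + h *\<^sub>R v) + f x) - h^2 * (u \<bullet> (Hess x *v v))\<bar>
       \<le> e * h^2 * (norm u * (2 * norm u + norm v))"
  proof (intro allI impI)
    fix h :: real assume h: "0 < h \<and> h < d'"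
    define g where "g t = f (x + t *\<^sub>R u + h *\<^sub>R v) - f (x + t *\<^sub>R u)" for t
    define g' where "g' t = grad (x + t *\<^sub>R u + h *\<^sub>R v) \<bullet> u - grad (x + t *\<^sub>R u) \<bullet> u" for t
    have der: "DERIV g t :> g' t" for t
    proof -
      have l1: "((\<lambda>t. x + t *\<^sub>R u + h *\<^sub>R v) has_derivative (\<lambda>k. k *\<^sub>R u)) (at t)"
        by (auto intro!: derivative_eq_intros)
      have l2: "((\<lambda>t. x + t *\<^sub>R u) has_derivative (\<lambda>k. k *\<^sub>R u)) (at t)"
        by (auto intro!: derivative_eq_intros)
      have c1: "((\<lambda>t. f (x + t *\<^sub>R u + h *\<^sub>R v)) has_derivative (\<lambda>k. grad (x + t *\<^sub>R u + h *\<^sub>R v) \<bullet> (k *\<^sub>R u))) (at t)"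
        using has_derivative_compose[OF l1 f_grad[rule_format]] by simp
      have c2: "((\<lambda>t. f (x + t *\<^sub>R u)) has_derivative (\<lambda>k. grad (x + t *\<^sub>R u) \<bullet> (k *\<^sub>R u))) (at t)"
        using has_derivative_compose[OF l2 f_grad[rule_format]] by simp
      have "(g has_derivative (\<lambda>k. grad (x + t *\<^sub>R u + h *\<^sub>R v) \<bullet> (k *\<^sub>R u) - grad (x + t *\<^sub>R u) \<bullet> (k *\<^sub>R u))) (at t)"
        unfolding g_def by (rule has_derivative_diff[OF c1 c2])
      moreover have "(\<lambda>k. grad (x + t *\<^sub>R u + h *\<^sub>R v) \<bullet> (k *\<^sub>R u) - grad (x + t *\<^sub>R u) \<bullet> (k *\<^sub>R u)) = (*) (g' t)"
        by (auto simp: g'_def algebra_simps)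
      ultimately show ?thesis by (simp add: has_field_derivative_def)
    qed
    obtain \<xi> where xi: "0 < \<xi>" "\<xi> < h" and mv: "g h - g 0 = (h - 0) * g' \<xi>"
      using MVT2[of 0 h g g'] der h by blast
    have hd: "h * (norm u + norm v + 1) < d"
    proof -
      have pp: "norm u + norm v + 1 > 0" using norm_ge_zero[of u] norm_ge_zero[of v] by linarith
      have "h < d / (norm u + norm v + 1)" using h by (simp add: d'_def)
      thus ?thesis using pp by (simp add: pos_less_divide_eq)
    qed
    define y1 where "y1 = x + \<xi> *\<^sub>R u + h *\<^sub>R v"
    define y2 where "y2 = x + \<xi> *\<^sub>R u"
    have n1: "norm (y1 - x) \<le> h * (norm u + norm v)"
    proof -
      have "norm (y1 - x) \<le> norm (\<xi> *\<^sub>R u) + norm (h *\<^sub>R v)" unfolding y1_def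
        using norm_triangle_ineq[of "\<xi> *\<^sub>R u" "h *\<^sub>R v"] by (simp add: add.assoc)
      also have "\<dots> \<le> h * norm u + h * norm v" using xi
        by (simp add: mult_right_mono)
      finally show ?thesis by (simp add: algebra_simps)
    qed
    have n2: "norm (y2 - x) \<le> h * norm u" unfolding y2_def using xi
      by (simp add: mult_right_mono)
    have "h * (norm u + norm v) < h * (norm u + norm v + 1)" using h by simp
    hence hd2: "h * (norm u + norm v) < d" using hd by linarith
    have b1: "norm (grad y1 - grad x - Hess x *v (y1 - x)) \<le> e * (h * (norm u + norm v))"
    proof -
      have "norm (y1 - x) < d" using n1 hd2 by linarith
      hence "norm (grad y1 - grad x - Hess x *v (y1 - x)) \<le> e * norm (y1 - x)" by (rule dd)
      also have "\<dots> \<le> e * (h * (norm u + norm v))" using n1 e by (simp add: mult_left_mono)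
      finally show ?thesis .
    qed
    have b2: "norm (grad y2 - grad x - Hess x *v (y2 - x)) \<le> e * (h * norm u)"
    proof -
      have "h * norm u \<le> h * (norm u + norm v)" using h by (simp add: mult_left_mono)
      hence "norm (y2 - x) < d" using n2 hd2 by linarith
      hence "norm (grad y2 - grad x - Hess x *v (y2 - x)) \<le> e * norm (y2 - x)" by (rule dd)
      also have "\<dots> \<le> e * (h * norm u)" using n2 e by (simp add: mult_left_mono)
      finally show ?thesis .
    qed
    define D1 where "D1 = grad y1 - grad x - Hess x *v (y1 - x)"
    define D2 where "D2 = grad y2 - grad x - Hess x *v (y2 - x)"
    have "y1 - x = (y2 - x) + h *\<^sub>R v" by (simp add: y1_def y2_def)
    hence HH: "Hess x *v (y1 - x) = Hess x *v (y2 - x) + h *\<^sub>R (Hess x *v v)"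
      by (simp only: matrix_vector_right_distrib matrix_vector_mult_scaleR)
    have "D1 - D2 = grad y1 - grad y2 - h *\<^sub>R (Hess x *v v)"
      unfolding D1_def D2_def HH by (simp add: algebra_simps)
    hence gg: "grad y1 - grad y2 = D1 - D2 + h *\<^sub>R (Hess x *v v)" by simp
    have "g' \<xi> = (grad y1 - grad y2) \<bullet> u" by (simp add: g'_def y1_def y2_def inner_diff_left)
    hence gx: "g' \<xi> = (D1 - D2) \<bullet> u + h * (u \<bullet> (Hess x *v v))"
      unfolding gg by (simp add: inner_add_left inner_add_right inner_commute)
    have "\<bar>(D1 - D2) \<bullet> u\<bar> \<le> norm (D1 - D2) * norm u" by (rule Cauchy_Schwarz_ineq2)
    also have "\<dots> \<le> (norm D1 + norm D2) * norm u"
      by (simp add: mult_right_mono norm_triangle_ineq4)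
    also have "\<dots> \<le> (e * (h * (norm u + norm v)) + e * (h * norm u)) * norm u"
      using b1 b2 unfolding D1_def D2_def by (simp add: mult_right_mono)
    finally have dx: "\<bar>(D1 - D2) \<bullet> u\<bar> \<le> e * h * (norm u * (2 * norm u + norm v))"
      by (simp add: algebra_simps)
    have "f (x + h *\<^sub>R u + h *\<^sub>R v) - f (x + h *\<^sub>R u) - f (x + h *\<^sub>R v) + f x = g h - g 0"
      by (simp add: g_def add.commute)
    also have "\<dots> = h * ((D1 - D2) \<bullet> u) + h^2 * (u \<bullet> (Hess x *v v))"
      using mv gx by (simp add: algebra_simps power2_eq_square)
    finally have eq: "f (x + h *\<^sub>R u + h *\<^sub>R v) - f (x + h *\<^sub>R u) - f (x + h *\<^sub>R v) + f x
       - h^2 * (u \<bullet> (Hess x *v v)) = h * ((D1 - D2) \<bullet> u)" by simp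
    have "\<bar>h * ((D1 - D2) \<bullet> u)\<bar> \<le> h * (e * h * (norm u * (2 * norm u + norm v)))"
      using dx h by (simp add: abs_mult mult_left_mono)
    then show "\<bar>(f (x + h *\<^sub>R u + h *\<^sub>R v) - f (x + h *\<^sub>R u) - f (x + h *\<^sub>R v) + f x) - h^2 * (u \<bullet> (Hess x *v v))\<bar>
       \<le> e * h^2 * (norm u * (2 * norm u + norm v))"
      unfolding eq by (simp add: power2_eq_square algebra_simps)
  qed
  thus ?thesis using d'pos by blast
qed


lemma hess_sym:
  fixes f :: "real^'n \<Rightarrow> real" and grad :: "real^'n \<Rightarrow> real^'n"
    and Hess :: "real^'n \<Rightarrow> real^'n^'n"
  assumes f_grad: "\<forall>x. (f has_derivative (\<lambda>h. grad x \<bullet> h)) (at x)"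
    and gH: "(grad has_derivative (\<lambda>h. Hess x *v h)) (at x)"
  shows "u \<bullet> (Hess x *v v) = v \<bullet> (Hess x *v u)"
proof (rule ccontr)
  assume ne: "u \<bullet> (Hess x *v v) \<noteq> v \<bullet> (Hess x *v u)"
  define a where "a = u \<bullet> (Hess x *v v)"
  define b where "b = v \<bullet> (Hess x *v u)"
  define K where "K = norm u * (2 * norm u + norm v) + norm v * (2 * norm v + norm u)"
  have K0: "K \<ge> 0" unfolding K_def by simp
  define e where "e = \<bar>a - b\<bar> / (K + 1)"
  have e0: "e > 0" using ne K0 unfolding e_def a_def b_def by simp
  obtain d1 where d1: "d1 > 0" and D1: "\<forall>h. 0 < h \<and> h < d1 \<longrightarrow>
     \<bar>(f (x + h *\<^sub>R u + h *\<^sub>R v) - f (x + h *\<^sub>R u) - f (x + h *\<^sub>R v) + f x) - h^2 * a\<bar>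
       \<le> e * h^2 * (norm u * (2 * norm u + norm v))"
    using schwarz_aux[of f grad Hess x e u v, OF f_grad gH e0] unfolding a_def by blast
  obtain d2 where d2: "d2 > 0" and D2: "\<forall>h. 0 < h \<and> h < d2 \<longrightarrow>
     \<bar>(f (x + h *\<^sub>R v + h *\<^sub>R u) - f (x + h *\<^sub>R v) - f (x + h *\<^sub>R u) + f x) - h^2 * b\<bar>
       \<le> e * h^2 * (norm v * (2 * norm v + norm u))"
    using schwarz_aux[of f grad Hess x e v u, OF f_grad gH e0] unfolding b_def by blast
  define h where "h = min d1 d2 / 2"
  have h0: "0 < h" "h < d1" "h < d2" using d1 d2 by (auto simp: h_def)
  define \<Delta> where "\<Delta> = f (x + h *\<^sub>R u + h *\<^sub>R v) - f (x + h *\<^sub>R u) - f (x + h *\<^sub>R v) + f x"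
  have eqv: "f (x + h *\<^sub>R v + h *\<^sub>R u) - f (x + h *\<^sub>R v) - f (x + h *\<^sub>R u) + f x = \<Delta>"
    unfolding \<Delta>_def by (simp add: add.assoc add.commute[of "h *\<^sub>R v"])
  have i1: "\<bar>\<Delta> - h^2 * a\<bar> \<le> e * h^2 * (norm u * (2 * norm u + norm v))"
    using D1 h0 unfolding \<Delta>_def by blast
  have i2: "\<bar>\<Delta> - h^2 * b\<bar> \<le> e * h^2 * (norm v * (2 * norm v + norm u))"
    using D2 h0 eqv by metis
  have "h^2 * \<bar>a - b\<bar> \<le> e * h^2 * K"
  proof -
    have "h^2 * \<bar>a - b\<bar> = \<bar>(\<Delta> - h^2 * b) - (\<Delta> - h^2 * a)\<bar>"
    proof -
      have "(\<Delta> - h^2 * b) - (\<Delta> - h^2 * a) = h^2 * (a - b)" by (simp add: algebra_simps)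
      thus ?thesis by (simp add: abs_mult)
    qed
    also have "\<dots> \<le> \<bar>\<Delta> - h^2 * a\<bar> + \<bar>\<Delta> - h^2 * b\<bar>" by linarith
    also have "\<dots> \<le> e * h^2 * K" using i1 i2 unfolding K_def by (simp add: algebra_simps)
    finally show ?thesis .
  qed
  hence "\<bar>a - b\<bar> \<le> e * K" using h0 by (simp add: algebra_simps)
  also have "e * K < \<bar>a - b\<bar>" using K0 ne unfolding e_def a_def b_def
    by (simp add: field_simps)
  finally show False by simp
qed


lemma outer_mult: "outer u v *v g = (v \<bullet> g) *\<^sub>R u"
  by (simp add: outer_def matrix_vector_mult_def inner_vec_def vec_eq_iff sum_distrib_left mult.commute mult.left_commute)

lemma precond_quad:
  fixes s y g :: "real^'n"
  assumes T: "y \<bullet> s \<noteq> 0"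
  shows "g \<bullet> (precond_update s y *v g) \<ge> (norm g)^2 / 2"
proof -
  define G where "G = g \<bullet> g"
  define P where "P = s \<bullet> g"
  define Q where "Q = y \<bullet> g"
  define Y where "Y = y \<bullet> y"
  define t where "t = y \<bullet> s"
  have e1: "g \<bullet> (precond_update s y *v g) = G - 2 * P * Q / t + 2 * Y * P^2 / t^2"
    unfolding precond_update_def
    by (simp add: matrix_vector_mult_add_rdistrib matrix_vector_mult_diff_rdistrib
        scaleR_matrix_vector_assoc[symmetric] outer_mult inner_diff_right inner_add_right
        G_def P_def Q_def Y_def t_def inner_commute power2_eq_square algebra_simps)
  define a where "a = P / t"
  have e2: "(g - (2 * a) *\<^sub>R y) \<bullet> (g - (2 * a) *\<^sub>R y) = G - 4 * a * Q + 4 * a^2 * Y"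
    by (simp add: G_def Q_def Y_def inner_diff_left inner_diff_right inner_commute algebra_simps power2_eq_square)
  define E where "E = G - 2 * P * Q / t + 2 * Y * P^2 / t^2"
  define B where "B = G - 4 * a * Q + 4 * a^2 * Y"
  have "0 \<le> (g - (2 * a) *\<^sub>R y) \<bullet> (g - (2 * a) *\<^sub>R y)" by simp
  hence B0: "0 \<le> B" using e2 by (simp add: B_def)
  have EB: "E - G / 2 = B / 2"
    using T unfolding a_def t_def E_def B_def by (simp add: field_simps power2_eq_square)
  have "G / 2 \<le> E" using B0 EB by linarith
  hence "G / 2 \<le> g \<bullet> (precond_update s y *v g)" using e1 by (simp add: E_def)
  thus ?thesis by (simp add: G_def power2_norm_eq_inner)
qed

lemma inv_quad:
  fixes A :: "real^'n^'n" and g :: "real^'n"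
  assumes sym: "\<And>u v. u \<bullet> (A *v v) = v \<bullet> (A *v u)"
    and lo: "\<And>z. m * (norm z)^2 \<le> z \<bullet> (A *v z)"
    and hi: "\<And>z. z \<bullet> (A *v z) \<le> M * (norm z)^2"
    and m0: "0 < m" and mM: "m \<le> M"
  shows "g \<bullet> (matrix_inv A *v g) \<ge> (norm g)^2 / M"
proof -
  have "inj ((*v) A)"
  proof (rule injI)
    fix p q assume "A *v p = A *v q"
    hence "A *v (p - q) = 0" by (simp add: matrix_vector_mult_diff_distrib)
    hence "m * (norm (p - q))^2 \<le> 0" using lo[of "p - q"] by simp
    hence "norm (p - q) = 0" using m0
      by (metis mult_pos_pos norm_ge_zero not_le order_le_less zero_less_power)
    thus "p = q" by simp
  qed
  then obtain B where "B ** A = mat 1" using matrix_left_invertible_injective by blast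
  hence "A ** B = mat 1" using matrix_left_right_inverse by blast
  hence "invertible A" using \<open>B ** A = mat 1\<close> unfolding invertible_def by blast
  hence "A ** matrix_inv A = mat 1 \<and> matrix_inv A ** A = mat 1"
    unfolding invertible_def matrix_inv_def by (rule someI_ex)
  hence Aw: "A *v (matrix_inv A *v g) = g"
    by (simp add: matrix_vector_mul_assoc)
  define w where "w = matrix_inv A *v g"
  have Aw': "A *v w = g" using Aw by (simp add: w_def)
  define N where "N = (norm g)^2"
  define Q where "Q = g \<bullet> (A *v g)"
  show ?thesis
  proof (cases "g = 0")
    case True thus ?thesis by simp
  next
    case False
    have N0: "N > 0" using False by (simp add: N_def)
    have Q0: "Q \<ge> m * N" using lo[of g] by (simp add: Q_def N_def)
    hence Qp: "Q > 0" using m0 N0 by (smt (verit) mult_pos_pos)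
    have QM: "Q \<le> M * N" using hi[of g] by (simp add: Q_def N_def)
    define t where "t = - N / Q"
    have wg: "w \<bullet> (A *v g) = N" using sym[of w g] Aw' by (simp add: N_def power2_norm_eq_inner)
    have gw: "g \<bullet> (A *v w) = N" using Aw' by (simp add: N_def power2_norm_eq_inner)
    have ww: "w \<bullet> (A *v w) = w \<bullet> g" using Aw' by simp
    have "0 \<le> m * (norm (w + t *\<^sub>R g))^2" using m0 by simp
    also have "\<dots> \<le> (w + t *\<^sub>R g) \<bullet> (A *v (w + t *\<^sub>R g))" by (rule lo)
    also have "\<dots> = w \<bullet> (A *v w) + t * (w \<bullet> (A *v g)) + t * (g \<bullet> (A *v w)) + t * t * Q"
      by (simp add: matrix_vector_right_distrib matrix_vector_mult_scaleR inner_add_left inner_add_right Q_def algebra_simps)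
    also have "\<dots> = w \<bullet> g - N * N / Q"
      unfolding ww wg gw t_def using Qp by (simp add: field_simps)
    finally have "N * N / Q \<le> w \<bullet> g" by simp
    moreover have "N / M \<le> N * N / Q"
      using Qp QM N0 m0 mM by (simp add: field_simps)
    ultimately have "N / M \<le> w \<bullet> g" by linarith
    thus ?thesis by (simp add: N_def w_def inner_commute)
  qed
qed


theorem lemma2:
  fixes f :: "real^'n \<Rightarrow> real" and grad :: "real^'n \<Rightarrow> real^'n"
    and Hess :: "real^'n \<Rightarrow> real^'n^'n" and x0 :: "real^'n"
    and m M \<theta> :: real
  assumes f_grad: "\<forall>x. (f has_derivative (\<lambda>h. grad x \<bullet> h)) (at x)"
    and grad_Hess: "\<forall>x. (grad has_derivative (\<lambda>h. Hess x *v h)) (at x)"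
    and m_pos: "0 < m" and mM: "m \<le> M" and theta_pos: "0 < \<theta>"
    and Hess_bounds: "\<forall>x \<in> {x. f x \<le> f x0}. \<forall>z.
        m * (norm z)^2 \<le> z \<bullet> (Hess x *v z) \<and> z \<bullet> (Hess x *v z) \<le> M * (norm z)^2"
  shows "\<exists>cm > 0. \<forall>xk dt H. xk \<in> {x. f x \<le> f x0} \<longrightarrow> 0 < dt \<longrightarrow>
      ((\<exists>s y. \<bar>s \<bullet> y\<bar> > \<theta> * (norm s)^2 \<and> H = precond_update s y)
        \<or> H = matrix_inv (Hess xk)) \<longrightarrow>
      local_model dt (grad xk) 0
        - local_model dt (grad xk) (- (dt / (1 + dt)) *\<^sub>R (H *v grad xk))
      \<ge> cm * dt / (2 * (1 + dt)) * (norm (grad xk))^2"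
proof -
  define cm where "cm = min (1/2) (1/M)"
  have M0: "M > 0" using m_pos mM by linarith
  have cm0: "cm > 0" using M0 by (simp add: cm_def)
  have main: "local_model dt (grad xk) 0
        - local_model dt (grad xk) (- (dt / (1 + dt)) *\<^sub>R (H *v grad xk))
      \<ge> cm * dt / (2 * (1 + dt)) * (norm (grad xk))^2"
    if xk: "xk \<in> {x. f x \<le> f x0}" and dt: "0 < dt"
      and HH: "(\<exists>s y. \<bar>s \<bullet> y\<bar> > \<theta> * (norm s)^2 \<and> H = precond_update s y)
        \<or> H = matrix_inv (Hess xk)" for xk dt H
  proof -
    define g where "g = grad xk"
    define N where "N = (norm g)^2"
    define q where "q = g \<bullet> (H *v g)"
    have N0: "N \<ge> 0" by (simp add: N_def)
    have qc: "q \<ge> cm * N"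
      using HH
    proof
      assume "\<exists>s y. \<bar>s \<bullet> y\<bar> > \<theta> * (norm s)^2 \<and> H = precond_update s y"
      then obtain s y where sy: "\<bar>s \<bullet> y\<bar> > \<theta> * (norm s)^2" and H: "H = precond_update s y" by blast
      have "\<theta> * (norm s)^2 \<ge> 0" using theta_pos by simp
      hence "y \<bullet> s \<noteq> 0" using sy by (auto simp: inner_commute)
      hence "q \<ge> N / 2" using precond_quad[of y s g] unfolding q_def N_def H by simp
      moreover have "cm * N \<le> 1 / 2 * N" using N0 by (intro mult_right_mono) (auto simp: cm_def)
      ultimately show ?thesis by linarith
    next
      assume H: "H = matrix_inv (Hess xk)"
      have b: "\<And>z. m * (norm z)^2 \<le> z \<bullet> (Hess xk *v z) \<and> z \<bullet> (Hess xk *v z) \<le> M * (norm z)^2"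
        using Hess_bounds xk by blast
      have sym: "\<And>u v. u \<bullet> (Hess xk *v v) = v \<bullet> (Hess xk *v u)"
        using hess_sym[of f grad Hess xk] f_grad grad_Hess by blast
      have "q \<ge> (norm g)^2 / M" unfolding q_def H
        by (rule inv_quad[OF sym _ _ m_pos mM]) (use b in auto)
      hence "q \<ge> 1 / M * N" by (simp add: N_def)
      moreover have "cm * N \<le> 1 / M * N" using N0 by (intro mult_right_mono) (auto simp: cm_def)
      ultimately show ?thesis by linarith
    qed
    have lhs: "local_model dt g 0 - local_model dt g (- (dt / (1 + dt)) *\<^sub>R (H *v g))
        = dt / (1 + dt) * ((1 + dt / 2) / (1 + dt) * q)"
      using dt unfolding local_model_def q_def by (simp add: field_simps)
    have r1: "(1 + dt / 2) / (1 + dt) \<ge> 1 / 2" using dt by (simp add: field_simps)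
    have cN: "cm * N \<ge> 0" using cm0 N0 by simp
    have "(1 + dt / 2) / (1 + dt) * q \<ge> 1 / 2 * (cm * N)"
    proof -
      have "1 / 2 * (cm * N) \<le> (1 + dt / 2) / (1 + dt) * (cm * N)"
        using r1 cN by (rule mult_right_mono)
      also have "\<dots> \<le> (1 + dt / 2) / (1 + dt) * q"
        using qc dt by (intro mult_left_mono) (auto simp: add_pos_pos)
      finally show ?thesis .
    qed
    hence "dt / (1 + dt) * ((1 + dt / 2) / (1 + dt) * q) \<ge> dt / (1 + dt) * (1 / 2 * (cm * N))"
      using dt by (intro mult_left_mono) auto
    moreover have "dt / (1 + dt) * (1 / 2 * (cm * N)) = cm * dt / (2 * (1 + dt)) * N"
      by (simp add: field_simps)
    ultimately show ?thesis using lhs unfolding g_def N_def by simp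
  qed
  show ?thesis using cm0 main by blast
qed

end
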